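(* Let $u$ be a solution of the linear equation $\partial_tu=\Delta u$ on $[0,\infty)\times\mathbb{Z}$ with initial data $u_0\in\ell^\infty_+(\mathbb{Z})$. Then for every $k\in\mathbb{Z}$, $N\in\mathbb{N}$ and $t\ge0$, $$u(t,k)\ge M(u_0,k,N)\,e^{-2t}I_N(2t),\qquad M(u_0,k,N)=\sum_{l=-N}^Nu_0(k-l).$$
   Context: $\Delta v(k)=v(k-1)-2v(k)+v(k+1)$. A solution: $u\in C^0([0,\infty);\ell^\infty_+(\mathbb{Z}))$ with $u(0)=u_0$, each $u(\cdot,k)$ $C^1$ on $(0,\infty)$ satisfying the equation pointwise. $I_N$ is the modified Bessel function of the first kind of order $N$, $I_N(s)=\frac1\pi\int_0^\pi e^{s\cos\theta}\cos(N\theta)\,d\theta$. *)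

theory Defs
  imports "HOL-Analysis.Analysis"
begin

definition disc_lap :: "(int \<Rightarrow> real) \<Rightarrow> int \<Rightarrow> real" where
  "disc_lap v k = v (k - 1) - 2 * v k + v (k + 1)"

definition linf_pos :: "(int \<Rightarrow> real) set" where
  "linf_pos = {v. (\<forall>k. 0 \<le> v k) \<and> (\<exists>B. \<forall>k. \<bar>v k\<bar> \<le> B)}"

definition besselI :: "nat \<Rightarrow> real \<Rightarrow> real" where
  "besselI N s = (1 / pi) * integral {0..pi} (\<lambda>\<theta>. exp (s * cos \<theta>) * cos (real N * \<theta>))"

definition is_solution :: "(real \<Rightarrow> int \<Rightarrow> real) \<Rightarrow> (int \<Rightarrow> real) \<Rightarrow> bool" where
  "is_solution u u0 \<longleftrightarrow>
     (\<forall>t\<ge>0. u t \<in> linf_pos) \<and>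
     (\<forall>t0\<ge>0. \<forall>e>0. \<exists>d>0. \<forall>t\<ge>0. \<bar>t - t0\<bar> < d \<longrightarrow> (\<forall>k. \<bar>u t k - u t0 k\<bar> \<le> e)) \<and>
     u 0 = u0 \<and>
     (\<forall>k. (\<forall>t>0. ((\<lambda>s. u s k) has_real_derivative disc_lap (u t) k) (at t)) \<and>
          continuous_on {0<..} (deriv (\<lambda>s. u s k)))"

definition M_sum :: "(int \<Rightarrow> real) \<Rightarrow> int \<Rightarrow> nat \<Rightarrow> real" where
  "M_sum u0 k N = (\<Sum>l = - int N..int N. u0 (k - l))"

end

theory Submission imports Defs begin

definition Gb :: "int \<Rightarrow> real \<Rightarrow> real" where
  "Gb n t = (1/pi) * integral {0..pi} (\<lambda>\<theta>. exp (2*t*cos \<theta>) * cos (of_int n * \<theta>))"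

lemma Gb_sym: "Gb (-n) t = Gb n t"
  by (simp add: Gb_def)

lemma Gb_deriv: "(Gb n has_real_derivative Gb (n-1) t + Gb (n+1) t) (at t)"
proof -
  have cb: "cbox 0 pi = {0..pi::real}" by simp
  have "((\<lambda>x. integral (cbox 0 pi) (\<lambda>\<theta>. exp (2*x*cos \<theta>) * cos (of_int n * \<theta>))) has_field_derivative
     integral (cbox 0 pi) (\<lambda>\<theta>. 2*cos \<theta> * exp (2*t*cos \<theta>) * cos (of_int n * \<theta>))) (at t within UNIV)"
    apply (rule leibniz_rule_field_derivative)
    subgoal by (auto intro!: derivative_eq_intros)
    subgoal by (intro integrable_continuous continuous_intros)
    subgoal by (auto intro!: continuous_intros simp: split_beta)
    by auto
  moreover have "integral {0..pi} (\<lambda>\<theta>. 2*cos \<theta> * exp (2*t*cos \<theta>) * cos (of_int n * \<theta>))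
     = integral {0..pi} (\<lambda>\<theta>. exp (2*t*cos \<theta>) * cos (of_int (n-1) * \<theta>))
     + integral {0..pi} (\<lambda>\<theta>. exp (2*t*cos \<theta>) * cos (of_int (n+1) * \<theta>))"
  proof -
    have "(\<lambda>\<theta>. 2*cos \<theta> * exp (2*t*cos \<theta>) * cos (of_int n * \<theta>)) =
      (\<lambda>\<theta>. exp (2*t*cos \<theta>) * cos (of_int (n-1) * \<theta>) + exp (2*t*cos \<theta>) * cos (of_int (n+1) * \<theta>))"
    proof
      fix \<theta> :: real
      have "cos (of_int (n-1) * \<theta>) + cos (of_int (n+1) * \<theta>) = 2 * cos \<theta> * cos (of_int n * \<theta>)"
        by (simp add: algebra_simps cos_add cos_diff)
      then show "2*cos \<theta> * exp (2*t*cos \<theta>) * cos (of_int n * \<theta>) =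
        exp (2*t*cos \<theta>) * cos (of_int (n-1) * \<theta>) + exp (2*t*cos \<theta>) * cos (of_int (n+1) * \<theta>)"
        by (simp add: algebra_simps) (metis distrib_left mult.commute mult.left_commute)
    qed
    then show ?thesis
      by (simp only:) (rule integral_add; intro integrable_continuous_interval continuous_intros)
  qed
  ultimately have "((\<lambda>x. integral {0..pi} (\<lambda>\<theta>. exp (2*x*cos \<theta>) * cos (of_int n * \<theta>))) has_real_derivative
     integral {0..pi} (\<lambda>\<theta>. exp (2*t*cos \<theta>) * cos (of_int (n-1) * \<theta>))
     + integral {0..pi} (\<lambda>\<theta>. exp (2*t*cos \<theta>) * cos (of_int (n+1) * \<theta>))) (at t)"
    unfolding cb by simp
  from DERIV_cmult[OF this, of "1/pi"] show ?thesis unfolding Gb_def by (simp add: distrib_left)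
qed

lemma Gb_cont: "continuous_on S (Gb n)"
  by (metis DERIV_isCont Gb_deriv continuous_at_imp_continuous_on)

lemma Gb_0: "Gb n 0 = (if n = 0 then 1 else 0)"
proof (cases "n = 0")
  case True then show ?thesis by (simp add: Gb_def)
next
  case False
  have "((\<lambda>x. cos (of_int n * x)) has_integral (sin (of_int n * pi) / of_int n - sin (of_int n * 0) / of_int n)) {0..pi}"
    apply (rule fundamental_theorem_of_calculus)
     apply simp
  proof -
    fix x :: real assume "x \<in> {0..pi}"
    have "((\<lambda>x. sin (of_int n * x) / of_int n) has_real_derivative cos (of_int n * x) * (of_int n * 1) / of_int n) (at x)"
      by (auto intro!: derivative_eq_intros)
    then have "((\<lambda>x. sin (of_int n * x) / of_int n) has_real_derivative cos (of_int n * x)) (at x)"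
      using False by simp
    then show "((\<lambda>x. sin (of_int n * x) / of_int n) has_vector_derivative cos (of_int n * x)) (at x within {0..pi})"
      using has_field_derivative_at_within has_real_derivative_iff_has_vector_derivative by blast
  qed
  then have "integral {0..pi} (\<lambda>x. cos (of_int n * x)) = 0"
    by (simp add: integral_unique mult.commute)
  then show ?thesis using False by (simp add: Gb_def)
qed

lemma Gb_bound: assumes "t \<ge> 0" shows "\<bar>Gb n t\<bar> \<le> exp (2*t)"
proof -
  have "norm (integral (cbox 0 pi) (\<lambda>\<theta>. exp (2*t*cos \<theta>) * cos (of_int n * \<theta>))) \<le> exp (2*t) * Henstock_Kurzweil_Integration.content (cbox 0 pi)"
  proof (rule has_integral_bound)
    show "((\<lambda>\<theta>. exp (2*t*cos \<theta>) * cos (of_int n * \<theta>)) has_integral integral (cbox 0 pi) (\<lambda>\<theta>. exp (2*t*cos \<theta>) * cos (of_int n * \<theta>))) (cbox 0 pi)"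
      by (intro integrable_integral integrable_continuous continuous_intros)
    fix x assume "x \<in> cbox 0 (pi::real)"
    have "exp (2*t*cos x) \<le> exp (2*t)" using assms by (simp add: mult_left_le)
    moreover have "\<bar>cos (of_int n * x)\<bar> \<le> 1" by simp
    moreover have "exp (2*t*cos x) * \<bar>cos (of_int n * x)\<bar> \<le> exp (2*t*cos x) * 1"
      by (rule mult_left_mono) auto
    moreover have "norm (exp (2*t*cos x) * cos (of_int n * x)) = exp (2*t*cos x) * \<bar>cos (of_int n * x)\<bar>"
      by (simp add: abs_mult)
    ultimately show "norm (exp (2*t*cos x) * cos (of_int n * x)) \<le> exp (2*t)"
      by linarith
  qed simp
  then have "\<bar>integral {0..pi} (\<lambda>\<theta>. exp (2*t*cos \<theta>) * cos (of_int n * \<theta>))\<bar> \<le> exp (2*t) * pi"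
    by simp
  then show ?thesis unfolding Gb_def abs_mult
    by (simp add: divide_le_eq mult.commute)
qed

lemma maxp:
  fixes f :: "real \<Rightarrow> 'a \<Rightarrow> real" and d :: "real \<Rightarrow> 'a \<Rightarrow> real"
  assumes c: "c \<ge> 0" and K: "K \<ge> 0"
  and init: "\<And>i. f 0 i \<ge> 0"
  and lb: "\<And>i t. 0 \<le> t \<Longrightarrow> t \<le> T \<Longrightarrow> f t i \<ge> -K"
  and cont: "\<And>i. continuous_on {0..T} (\<lambda>t. f t i)"
  and der: "\<And>i t. 0 < t \<Longrightarrow> t < T \<Longrightarrow> ((\<lambda>s. f s i) has_real_derivative d t i) (at t)"
  and dc: "\<And>t i b. 0 < t \<Longrightarrow> t < T \<Longrightarrow> b \<ge> 0 \<Longrightarrow> (\<forall>j. f t j \<ge> -b) \<Longrightarrow> d t i \<ge> -c*b"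
  and t: "0 \<le> t" "t \<le> T"
  shows "f t i \<ge> 0"
proof -
  have ind: "\<forall>i t. 0 \<le> t \<longrightarrow> t \<le> T \<longrightarrow> f t i \<ge> -K * (c*t)^m / fact m" for m
  proof (induction m)
    case 0
    then show ?case using lb by simp
  next
    case (Suc m)
    show ?case
    proof (intro allI impI)
      fix i and t :: real
      assume t: "0 \<le> t" "t \<le> T"
      define h where "h = (\<lambda>s. f s i + K * (c * s) ^ Suc m / fact (Suc m))"
      have "h 0 \<le> h t"
      proof (rule DERIV_nonneg_imp_increasing_open[OF t(1)])
        fix x assume x: "0 < x" "x < t"
        have "(h has_real_derivative (d x i + K*c*(c*x)^m/fact m)) (at x)"
          unfolding h_def
          apply (rule derivative_eq_intros der refl | use x t in simp)+
          done
        moreover have "d x i + K*c*(c*x)^m/fact m \<ge> 0"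
        proof -
          have "d x i \<ge> -c*(K*(c*x)^m/fact m)"
            apply (rule dc)
            using x t Suc.IH c K by (auto simp: zero_le_mult_iff)
          then show ?thesis by (simp add: algebra_simps)
        qed
        ultimately show "\<exists>y. (h has_real_derivative y) (at x) \<and> 0 \<le> y" by blast
      next
        show "continuous_on {0..t} h" unfolding h_def
          by (intro continuous_intros continuous_on_subset[OF cont]) (use t in auto)
      qed
      then show "f t i \<ge> -K * (c*t)^Suc m / fact (Suc m)"
        using init[of i] by (simp add: h_def)
    qed
  qed
  have lim: "(\<lambda>m. -K * (inverse (fact m) * (c*t)^m)) \<longlonglongrightarrow> -K * 0"
    by (intro tendsto_intros summable_LIMSEQ_zero[OF summable_exp])
  show ?thesis
  proof (rule LIMSEQ_le_const2[OF lim[simplified]], intro exI allI impI)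
    fix n :: nat
    have "-K * (c*t)^n / fact n \<le> f t i" using ind t by blast
    then show "- (K * (inverse (fact n) * (c*t)^n)) \<le> f t i" by (simp add: field_simps)
  qed
qed


lemma deriv_ed:
  assumes "(g has_real_derivative g') (at s)" "(h has_real_derivative h') (at s)"
  shows "((\<lambda>s. exp s * (g s - h s)) has_real_derivative exp s * (g s - h s) + exp s * (g' - h')) (at s)"
proof -
  have "((\<lambda>s. exp s * (g s - h s)) has_real_derivative exp s * (g s - h s) + (g' - h') * exp s) (at s)"
    using DERIV_mult[OF DERIV_exp DERIV_diff[OF assms]] .
  then show ?thesis by (simp add: mult.commute)
qed

lemma Gb_step:
  fixes n :: nat and t :: real
  assumes t: "t \<ge> 0"
  shows "Gb (int n + 1) t \<le> Gb (int n) t"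
proof -
  define f where "f = (\<lambda>s (m::nat). exp s * (Gb (int m) s - Gb (int m + 1) s))"
  define d where "d = (\<lambda>s (m::nat). exp s * (Gb (int m) s - Gb (int m + 1) s)
     + exp s * ((Gb (int m - 1) s + Gb (int m + 1) s) - (Gb (int m) s + Gb (int m + 2) s)))"
  have "f t n \<ge> 0"
  proof (rule maxp[where c=3 and K="2 * exp (3 * (t+1))" and T="t+1" and d=d and f=f and t=t and i=n])
    show "0 \<le> f 0 i" for i by (simp add: f_def Gb_0)
  next
    fix i :: nat and s :: real assume s: "0 \<le> s" "s \<le> t+1"
    have "abs (Gb (int i) s) \<le> exp (2* s)" "abs (Gb (int i + 1) s) \<le> exp (2* s)"
      using Gb_bound s by auto
    then have "abs (Gb (int i) s - Gb (int i + 1) s) \<le> 2 * exp (2* s)" by linarith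
    then have "abs (f s i) \<le> exp s * (2 * exp (2* s))"
      unfolding f_def abs_mult by (simp add: mult_left_mono)
    also have "\<dots> = 2 * exp (3* s)" by (simp add: exp_add[symmetric])
    also have "\<dots> \<le> 2 * exp (3*(t+1))" using s by simp
    finally show "- (2 * exp (3 * (t+1))) \<le> f s i" by linarith
  next
    fix i show "continuous_on {0..t+1} (\<lambda>s. f s i)"
      unfolding f_def by (intro continuous_intros continuous_on_compose2[OF Gb_cont]) auto
  next
    fix i :: nat and s :: real
    show "((\<lambda>s. f s i) has_real_derivative d s i) (at s)"
      unfolding f_def d_def
      using deriv_ed[OF Gb_deriv[of "int i" s] Gb_deriv[of "int i + 1" s]] by (simp add: add.assoc)
  next
    fix s :: real and i :: nat and b :: real
    assume b: "0 \<le> b" "\<forall>j. - b \<le> f s j"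
    show "- 3 * b \<le> d s i"
    proof (cases i)
      case 0
      have "d s i = f s 1" unfolding d_def f_def using 0
        by (simp add: Gb_sym[of 1, simplified] algebra_simps)
      then show ?thesis using b(1) b(2)[rule_format, of 1] by linarith
    next
      case (Suc m)
      have "d s i = f s i + f s m + f s (Suc i)" unfolding d_def f_def using Suc
        by (simp add: algebra_simps)
      then show ?thesis using b(1) b(2)[rule_format, of i] b(2)[rule_format, of m] b(2)[rule_format, of "Suc i"] by linarith
    qed
  qed (use t in auto)
  then show ?thesis unfolding f_def by (simp add: zero_le_mult_iff)
qed


lemma Gb_mono: "l \<le> N \<Longrightarrow> 0 \<le> t \<Longrightarrow> Gb (int N) t \<le> Gb (int l) t"
proof (induction N)
  case 0 then show ?case by simp
next
  case (Suc N)
  show ?case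
  proof (cases "l \<le> N")
    case True
    have "Gb (int (Suc N)) t \<le> Gb (int N) t" using Gb_step[of t N] Suc.prems by (simp add: add.commute)
    moreover have "Gb (int N) t \<le> Gb (int l) t" using Suc True by simp
    ultimately show ?thesis by linarith
  next
    case False
    then have "l = Suc N" using Suc by simp
    then show ?thesis by simp
  qed
qed

lemma Gb_abs: assumes "\<bar>l\<bar> \<le> int N" "0 \<le> t" shows "Gb (int N) t \<le> Gb l t"
proof -
  have "Gb l t = Gb (int (nat \<bar>l\<bar>)) t"
    by (cases "l \<ge> 0") (auto simp: Gb_sym[of l, symmetric])
  moreover have "Gb (int N) t \<le> Gb (int (nat \<bar>l\<bar>)) t"
    by (rule Gb_mono) (use assms in auto)
  ultimately show ?thesis by simp
qed

theorem lemmaA14: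
  fixes u :: "real \<Rightarrow> int \<Rightarrow> real" and u0 :: "int \<Rightarrow> real"
  assumes "u0 \<in> linf_pos" and "is_solution u u0"
  shows "\<forall>k N t. t \<ge> 0 \<longrightarrow> u t k \<ge> M_sum u0 k N * exp (-2 * t) * besselI N (2 * t)"
proof (intro allI impI)
  fix k :: int and N :: nat and t :: real
  assume t: "0 \<le> t"
  have u0pos: "\<And>j. 0 \<le> u0 j" using assms(1) by (simp add: linf_pos_def)
  have upos: "\<And>s j. 0 \<le> s \<Longrightarrow> 0 \<le> u s j" using assms(2) by (simp add: is_solution_def linf_pos_def)
  have ucont: "\<And>t0 e. 0 \<le> t0 \<Longrightarrow> e > 0 \<Longrightarrow> \<exists>d>0. \<forall>t\<ge>0. \<bar>t - t0\<bar> < d \<longrightarrow> (\<forall>k. \<bar>u t k - u t0 k\<bar> \<le> e)"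
    using assms(2) unfolding is_solution_def by blast
  have u0: "u 0 = u0" using assms(2) unfolding is_solution_def by blast
  have uder: "\<And>j s. 0 < s \<Longrightarrow> ((\<lambda>s. u s j) has_real_derivative disc_lap (u s) j) (at s)"
    using assms(2) unfolding is_solution_def by blast
  have uc: "continuous_on {0..T} (\<lambda>s. u s j)" for T j
    unfolding continuous_on_iff
  proof (intro ballI allI impI)
    fix x e assume x: "x \<in> {0..T}" and e: "(0::real) < e"
    obtain d where d: "d > 0" "\<forall>t\<ge>0. \<bar>t - x\<bar> < d \<longrightarrow> (\<forall>k. \<bar>u t k - u x k\<bar> \<le> e/2)"
      using ucont[of x "e/2"] x e by auto
    show "\<exists>d>0. \<forall>x'\<in>{0..T}. dist x' x < d \<longrightarrow> dist (u x' j) (u x j) < e"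
    proof (intro exI conjI ballI impI)
      fix x' assume "x' \<in> {0..T}" "dist x' x < d"
      then have "\<bar>u x' j - u x j\<bar> \<le> e/2" using d by (auto simp: dist_real_def)
      then show "dist (u x' j) (u x j) < e" using e by (simp add: dist_real_def)
    qed (rule d)
  qed
  define S where "S = {-int N..int N}"
  have finS: "finite S" by (simp add: S_def)
  define f where "f = (\<lambda>s j. exp (2* s) * u s j - (\<Sum>l\<in>S. u0 (k-l) * Gb (j-k+l) s))"
  define d where "d = (\<lambda>s j. exp (2* s) * 2 * u s j + disc_lap (u s) j * exp (2* s)
      - (\<Sum>l\<in>S. u0 (k-l) * (Gb (j-k+l-1) s + Gb (j-k+l+1) s)))"
  define K where "K = exp (2*(t+1)) * (\<Sum>l\<in>S. u0 (k-l))"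
  have "f t k \<ge> 0"
  proof (rule maxp[where c=2 and K=K and T="t+1" and d=d and f=f and t=t and i=k])
    show "0 \<le> K" unfolding K_def by (intro mult_nonneg_nonneg sum_nonneg u0pos) auto
  next
    fix j
    have "(\<Sum>l\<in>S. u0 (k-l) * Gb (j-k+l) 0) = (\<Sum>l\<in>S. if l = k-j then u0 j else 0)"
      by (rule sum.cong) (auto simp: Gb_0)
    also have "\<dots> = (if k-j \<in> S then u0 j else 0)" using finS by simp
    also have "\<dots> \<le> u0 j" using u0pos by simp
    finally show "0 \<le> f 0 j" unfolding f_def by (simp add: u0)
  next
    fix j and s :: real assume s: "0 \<le> s" "s \<le> t+1"
    have "(\<Sum>l\<in>S. u0 (k-l) * Gb (j-k+l) s) \<le> (\<Sum>l\<in>S. u0 (k-l) * exp (2*(t+1)))"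
    proof (rule sum_mono, rule mult_left_mono)
      fix l
      have "Gb (j-k+l) s \<le> exp (2 * s)" using Gb_bound[OF s(1), of "j-k+l"] by linarith
      also have "\<dots> \<le> exp (2*(t+1))" using s by simp
      finally show "Gb (j-k+l) s \<le> exp (2*(t+1))" .
    qed (rule u0pos)
    also have "\<dots> = K" unfolding K_def by (simp add: sum_distrib_right mult.commute)
    finally have "(\<Sum>l\<in>S. u0 (k-l) * Gb (j-k+l) s) \<le> K" .
    moreover have "0 \<le> exp (2* s) * u s j" using upos[OF s(1)] by simp
    ultimately show "- K \<le> f s j" unfolding f_def by linarith
  next
    fix j show "continuous_on {0..t+1} (\<lambda>s. f s j)"
      unfolding f_def
      by (intro continuous_intros uc continuous_on_sum continuous_on_mult continuous_on_const Gb_cont)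
  next
    fix j and s :: real assume s: "0 < s" "s < t+1"
    have A: "((\<lambda>s. exp (2* s)) has_real_derivative exp (2* s) * 2) (at s)"
      using DERIV_chain2[OF DERIV_exp DERIV_cmult[OF DERIV_ident, where c=2]] by simp
    have C: "((\<lambda>s. \<Sum>l\<in>S. u0 (k-l) * Gb (j-k+l) s) has_real_derivative
        (\<Sum>l\<in>S. u0 (k-l) * (Gb (j-k+l-1) s + Gb (j-k+l+1) s))) (at s)"
      by (rule DERIV_sum, rule DERIV_cmult, rule Gb_deriv)
    show "((\<lambda>s. f s j) has_real_derivative d s j) (at s)"
      unfolding f_def d_def using DERIV_diff[OF DERIV_mult[OF A uder[OF s(1), of j]] C] by simp
  next
    fix s :: real and j b
    assume b: "0 \<le> b" "\<forall>j. - b \<le> f s j"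
    have "d s j = f s (j-1) + f s (j+1)"
    proof -
      have "(\<Sum>l\<in>S. u0 (k-l) * (Gb (j-k+l-1) s + Gb (j-k+l+1) s))
          = (\<Sum>l\<in>S. u0 (k-l) * Gb (j-1-k+l) s) + (\<Sum>l\<in>S. u0 (k-l) * Gb (j+1-k+l) s)"
        by (simp add: distrib_left sum.distrib algebra_simps)
      then show ?thesis unfolding d_def f_def disc_lap_def by (simp add: algebra_simps)
    qed
    then show "- 2 * b \<le> d s j" using b(2)[rule_format, of "j-1"] b(2)[rule_format, of "j+1"] by linarith
  qed (use t in auto)
  then have key: "(\<Sum>l\<in>S. u0 (k-l) * Gb l t) \<le> exp (2*t) * u t k"
    unfolding f_def by simp
  have "(\<Sum>l\<in>S. u0 (k-l) * Gb (int N) t) \<le> (\<Sum>l\<in>S. u0 (k-l) * Gb l t)"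
    by (intro sum_mono mult_left_mono Gb_abs u0pos t) (auto simp: S_def)
  also note key
  finally have "M_sum u0 k N * Gb (int N) t \<le> exp (2*t) * u t k"
    unfolding M_sum_def S_def by (simp add: sum_distrib_right)
  then have "exp (-2*t) * (M_sum u0 k N * Gb (int N) t) \<le> exp (-2*t) * (exp (2*t) * u t k)"
    by (rule mult_left_mono) simp
  also have "\<dots> = u t k" by (simp add: exp_add[symmetric] mult.assoc[symmetric])
  finally have "exp (-2*t) * (M_sum u0 k N * Gb (int N) t) \<le> u t k" .
  moreover have "besselI N (2*t) = Gb (int N) t" by (simp add: besselI_def Gb_def)
  ultimately show "M_sum u0 k N * exp (-2 * t) * besselI N (2 * t) \<le> u t k"
    by (simp add: algebra_simps)
qed

end
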